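(* Let $x$ and $y$ be finite sequences of strings and $\lambda\ge0$. For every valid labeled summary tree $T$ representing $x$ and $y$, $\mathsf{EDG}(x,y,\lambda)\le\mathrm{error}_\lambda(T)$.
   Context: Strings are over a finite alphabet; $\varepsilon$ is the empty string and $\mathsf{ED}$ is Levenshtein edit distance (unit costs). $\mathsf{AED}(x,y)$ for string sequences is the minimum cost of transforming $x$ into $y$ using only inserting a string $w$ into $x$ (cost $\mathsf{ED}(w,\varepsilon)$) and substituting a string $w$ of $x$ by $w'$ (cost $\mathsf{ED}(w,w')$), with no deletions (defined only if $|x|\le|y|$). A labeled summary tree of $\{x,y\}$ is a rooted tree $T$ with a sentinel root, other nodes labeled by strings, with $x$ and $y$ assigned to nodes $v_x,v_y$; $L_T(v)$ is the label sequence on the root-to-$v$ path excluding the sentinel; $|T|$ counts non-sentinel nodes. It is valid if $|x|\le|L_T(v_x)|$ and $|y|\le|L_T(v_y)|$, and $\mathrm{error}_\lambda(T)=\mathsf{AED}(x,L_T(v_x))+\mathsf{AED}(y,L_T(v_y))+\lambda|T|$. $\mathsf{EDG}(i,j,\lambda)$ ($1\le i\le|x|+1$, $1\le j\le|y|+1$): $\mathsf{EDG}(|x|+1,|y|+1,\lambda)=0$, $\mathsf{EDG}(i,|y|+1,\lambda)=\lambda(|x|-i+1)$, $\mathsf{EDG}(|x|+1,j,\lambda)=\lambda(|y|-j+1)$, and otherwise the minimum of $\mathsf{EDG}(i+1,j+1,\lambda)+\lambda+\mathsf{ED}(x_i,y_j)$, $\mathsf{EDG}(i,j+1,\lambda)+\lambda+\mathsf{ED}(\varepsilon,y_j)$,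 $\mathsf{EDG}(i+1,j,\lambda)+\lambda+\mathsf{ED}(x_i,\varepsilon)$, and $\lambda(|x|-i+1)+\lambda(|y|-j+1)$; $\mathsf{EDG}(x,y,\lambda)=\mathsf{EDG}(1,1,\lambda)$. *)

theory Defs
  imports Complex_Main
begin

fun ED :: "'a list \<Rightarrow> 'a list \<Rightarrow> nat" where
  "ED [] ys = length ys"
| "ED xs [] = length xs"
| "ED (a # xs) (b # ys) =
     min (min (ED xs ys + (if a = b then 0 else 1)) (ED xs (b # ys) + 1)) (ED (a # xs) ys + 1)"

inductive aed_reach :: "'a list list \<Rightarrow> 'a list list \<Rightarrow> nat \<Rightarrow> bool" where
  refl: "aed_reach x x 0"
| ins: "aed_reach x z c \<Longrightarrow> i \<le> length z \<Longrightarrow>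
          aed_reach x (take i z @ [w] @ drop i z) (c + ED w [])"
| subst: "aed_reach x z c \<Longrightarrow> i < length z \<Longrightarrow>
          aed_reach x (z[i := w']) (c + ED (z ! i) w')"

definition AED :: "'a list list \<Rightarrow> 'a list list \<Rightarrow> nat" where
  "AED x y = (LEAST c. aed_reach x y c)"

(* Labeled summary tree: sentinel root r, non-sentinel nodes N, parent function par,
   labels lab.  root_path v ps: ps is the list of non-sentinel nodes on the path
   from the root to v (excluding the sentinel). *)
inductive root_path :: "'v \<Rightarrow> 'v set \<Rightarrow> ('v \<Rightarrow> 'v) \<Rightarrow> 'v \<Rightarrow> 'v list \<Rightarrow> bool"
  for r N par where
  root: "root_path r N par r []"
| step: "v \<in> N \<Longrightarrow> root_path r N par (par v) ps \<Longrightarrow> root_path r N par v (ps @ [v])"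

definition is_rooted_tree :: "'v \<Rightarrow> 'v set \<Rightarrow> ('v \<Rightarrow> 'v) \<Rightarrow> bool" where
  "is_rooted_tree r N par \<longleftrightarrow> finite N \<and> r \<notin> N \<and> (\<forall>v\<in>N. par v \<in> insert r N)
     \<and> (\<forall>v\<in>N. \<exists>ps. root_path r N par v ps)"

definition L_T :: "'v \<Rightarrow> 'v set \<Rightarrow> ('v \<Rightarrow> 'v) \<Rightarrow> ('v \<Rightarrow> 'a list) \<Rightarrow> 'v \<Rightarrow> 'a list list" where
  "L_T r N par lab v = map lab (THE ps. root_path r N par v ps)"

definition valid_summary_tree ::
  "'v \<Rightarrow> 'v set \<Rightarrow> ('v \<Rightarrow> 'v) \<Rightarrow> ('v \<Rightarrow> 'a list) \<Rightarrow> 'v \<Rightarrow> 'v \<Rightarrow>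
   'a list list \<Rightarrow> 'a list list \<Rightarrow> bool" where
  "valid_summary_tree r N par lab vx vy x y \<longleftrightarrow>
     is_rooted_tree r N par \<and> vx \<in> insert r N \<and> vy \<in> insert r N \<and>
     length x \<le> length (L_T r N par lab vx) \<and> length y \<le> length (L_T r N par lab vy)"

definition error_T ::
  "real \<Rightarrow> 'v \<Rightarrow> 'v set \<Rightarrow> ('v \<Rightarrow> 'v) \<Rightarrow> ('v \<Rightarrow> 'a list) \<Rightarrow> 'v \<Rightarrow> 'v \<Rightarrow>
   'a list list \<Rightarrow> 'a list list \<Rightarrow> real" where
  "error_T lam r N par lab vx vy x y =
     real (AED x (L_T r N par lab vx)) + real (AED y (L_T r N par lab vy)) + lam * real (card N)"

(* EDG(i,j,lam) on suffixes: edg (drop (i-1) x) (drop (j-1) y) lam = EDG(i,j,lam) *)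
fun edg :: "'a list list \<Rightarrow> 'a list list \<Rightarrow> real \<Rightarrow> real" where
  "edg [] [] lam = 0"
| "edg xs [] lam = lam * real (length xs)"
| "edg [] ys lam = lam * real (length ys)"
| "edg (a # xs) (b # ys) lam =
     min (min (edg xs ys lam + lam + real (ED a b))
              (edg (a # xs) ys lam + lam + real (ED [] b)))
         (min (edg xs (b # ys) lam + lam + real (ED a []))
              (lam * real (length (a # xs)) + lam * real (length (b # ys))))"

definition EDG :: "'a list list \<Rightarrow> 'a list list \<Rightarrow> real \<Rightarrow> real" where
  "EDG x y lam = edg x y lam"

end

theory Submission imports Defs begin

lemma ED_Nil2[simp]: "ED xs [] = length xs"
  by (cases xs) auto

lemma ED_refl[simp]: "ED a a = 0"
  by (induction a) auto

lemma ED_sym: "ED a b = ED b a"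
  by (induction a b rule: ED.induct) (auto simp: min.commute min.left_commute min.assoc)

lemma ED_ge1: "length b \<le> ED a b + length a"
  by (induction a b rule: ED.induct) auto

lemma ED_ge2: "length a \<le> ED a b + length b"
  by (induction a b rule: ED.induct) auto

lemma ED_le: "ED a b \<le> length a + length b"
  by (induction a b rule: ED.induct) auto

lemma ED_tri: "ED a c \<le> ED a b + ED b c"
proof (induction "length a + length b + length c" arbitrary: a b c rule: less_induct)
  case less
  show ?case
  proof (cases a)
    case Nil then show ?thesis using ED_ge1[where a=b and b=c] by simp
  next
    case (Cons x a')
    show ?thesis
    proof (cases b)
      case Nil then show ?thesis using ED_le[of a c] by simp
    next
      case (Cons y b')
      show ?thesis
      proof (cases c)
        case Nil then show ?thesis using ED_ge2[of a b] by simp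
      next
        case (Cons z c')
        have ac: "ED a c \<le> ED a' c' + (if x = z then 0 else 1)"
             "ED a c \<le> ED a' c + 1" "ED a c \<le> ED a c' + 1"
          using \<open>a = x # a'\<close> \<open>c = z # c'\<close> by auto
        have ab: "ED a b = ED a' b' + (if x = y then 0 else 1) \<or> ED a b = ED a' b + 1 \<or> ED a b = ED a b' + 1"
          using \<open>a = x # a'\<close> \<open>b = y # b'\<close> by (auto simp: min_def)
        have bc: "ED b c = ED b' c' + (if y = z then 0 else 1) \<or> ED b c = ED b' c + 1 \<or> ED b c = ED b c' + 1"
          using \<open>b = y # b'\<close> \<open>c = z # c'\<close> by (auto simp: min_def)
        have l: "length a' < length a" "length b' < length b" "length c' < length c"
          using \<open>a = x # a'\<close> \<open>b = y # b'\<close> \<open>c = z # c'\<close> by auto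
        have i1: "ED a' c \<le> ED a' b + ED b c" using less l by simp
        have i2: "ED a c' \<le> ED a b + ED b c'" using less l by simp
        have i3: "ED a' c' \<le> ED a' b' + ED b' c'" using less l by simp
        have i4: "ED a' c \<le> ED a' b' + ED b' c" using less l by simp
        have i5: "ED a c' \<le> ED a b' + ED b' c'" using less l by simp
        have i6: "ED a c \<le> ED a b' + ED b' c" using less l by simp
        from ab bc ac i1 i2 i3 i4 i5 i6 show ?thesis
          by (auto split: if_splits)
      qed
    qed
  qed
qed

inductive emb :: "'a list list \<Rightarrow> 'a list list \<Rightarrow> nat \<Rightarrow> bool" where
  emb_nil: "emb [] [] 0"
| emb_match: "emb x L c \<Longrightarrow> emb (a # x) (b # L) (c + ED a b)"
| emb_skip: "emb x L c \<Longrightarrow> emb x (b # L) (c + length b)"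

lemma emb_refl: "emb x x 0"
proof (induction x)
  case Nil then show ?case by (rule emb_nil)
next
  case (Cons a x) then show ?case using emb_match[OF Cons, of a a] by simp
qed

lemma emb_len: "emb x L c \<Longrightarrow> length x \<le> length L"
  by (induction rule: emb.induct) auto

lemma emb_ins: "emb x z c \<Longrightarrow> i \<le> length z \<Longrightarrow> emb x (take i z @ [w] @ drop i z) (c + length w)"
proof (induction arbitrary: i rule: emb.induct)
  case emb_nil then show ?case using emb_skip[OF emb.emb_nil, of w] by simp
next
  case (emb_match x L c a b)
  show ?case
  proof (cases i)
    case 0 then show ?thesis using emb.emb_skip[OF emb.emb_match[OF emb_match.hyps(1), of a b], where b=w] by simp
  next
    case (Suc j) then show ?thesis using emb_match.IH[of j] emb_match.prems emb.emb_match
      by (fastforce simp: algebra_simps)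
  qed
next
  case (emb_skip x L c b)
  show ?case
  proof (cases i)
    case 0 then show ?thesis using emb.emb_skip[OF emb.emb_skip[OF emb_skip.hyps(1), where b=b], where b=w] by simp
  next
    case (Suc j) then show ?thesis using emb_skip.IH[of j] emb_skip.prems emb.emb_skip
      by (fastforce simp: algebra_simps)
  qed
qed

lemma emb_subst: "emb x z c \<Longrightarrow> i < length z \<Longrightarrow> \<exists>c'. c' \<le> c + ED (z ! i) w \<and> emb x (z[i := w]) c'"
proof (induction arbitrary: i rule: emb.induct)
  case emb_nil then show ?case by simp
next
  case (emb_match x L c a b)
  show ?case
  proof (cases i)
    case 0
    have "emb (a # x) ((b # L)[i := w]) (c + ED a w)" using 0 emb.emb_match[OF emb_match.hyps(1)] by simp
    moreover have "c + ED a w \<le> c + ED a b + ED ((b # L) ! i) w" using 0 ED_tri[of a w b] by simp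
    ultimately show ?thesis by blast
  next
    case (Suc j)
    then obtain c' where "c' \<le> c + ED (L ! j) w" "emb x (L[j := w]) c'"
      using emb_match.IH[of j] emb_match.prems by auto
    then show ?thesis using Suc emb.emb_match[of x "L[j := w]" c' a b]
      by (intro exI[of _ "c' + ED a b"]) auto
  qed
next
  case (emb_skip x L c b)
  show ?case
  proof (cases i)
    case 0
    have "emb x ((b # L)[i := w]) (c + length w)" using 0 emb.emb_skip[OF emb_skip.hyps(1)] by simp
    moreover have "c + length w \<le> c + length b + ED ((b # L) ! i) w" using 0 ED_ge1[where a=b and b=w] by simp
    ultimately show ?thesis by blast
  next
    case (Suc j)
    then obtain c' where "c' \<le> c + ED (L ! j) w" "emb x (L[j := w]) c'"
      using emb_skip.IH[of j] emb_skip.prems by auto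
    then show ?thesis using Suc emb.emb_skip[of x "L[j := w]" c' b]
      by (intro exI[of _ "c' + length b"]) auto
  qed
qed

lemma aed_emb: "aed_reach x z c \<Longrightarrow> \<exists>c'. c' \<le> c \<and> emb x z c'"
proof (induction rule: aed_reach.induct)
  case (refl x) then show ?case using emb_refl by blast
next
  case (ins x z c i w)
  then obtain c' where "c' \<le> c" "emb x z c'" by blast
  then show ?case using emb_ins[of x z c' i w] ins by (intro exI[of _ "c' + length w"]) auto
next
  case (subst x z c i w')
  then obtain c' where "c' \<le> c" "emb x z c'" by blast
  then obtain c'' where "c'' \<le> c' + ED (z ! i) w'" "emb x (z[i := w']) c''"
    using emb_subst[of x z c' i w'] subst by blast
  then show ?case using \<open>c' \<le> c\<close> by (intro exI[of _ c'']) auto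
qed

lemma aed_cons: "aed_reach x z c \<Longrightarrow> aed_reach (a # x) (a # z) c"
proof (induction rule: aed_reach.induct)
  case (refl x) then show ?case by (rule aed_reach.refl)
next
  case (ins x z c i w)
  then show ?case using aed_reach.ins[of "a # x" "a # z" c "Suc i" w] by simp
next
  case (subst x z c i w')
  then show ?case using aed_reach.subst[of "a # x" "a # z" c "Suc i" w'] by simp
qed

lemma aed_exists: "length x \<le> length L \<Longrightarrow> \<exists>c. aed_reach x L c"
proof (induction L arbitrary: x)
  case Nil then show ?case using aed_reach.refl by fastforce
next
  case (Cons b L)
  show ?case
  proof (cases x)
    case Nil
    then obtain c where "aed_reach x L c" using Cons by fastforce
    then show ?thesis using aed_reach.ins[of x L c 0 b] by auto
  next
    case (Cons a x')
    then obtain c where "aed_reach x' L c" using Cons.IH Cons.prems by fastforce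
    then have "aed_reach x (a # L) c" using aed_cons Cons by blast
    then show ?thesis using aed_reach.subst[of x "a # L" c 0 b] by auto
  qed
qed

lemma AED_emb: "length x \<le> length L \<Longrightarrow> \<exists>c'. c' \<le> AED x L \<and> emb x L c'"
proof -
  assume "length x \<le> length L"
  then obtain c where "aed_reach x L c" using aed_exists by blast
  then have "aed_reach x L (AED x L)" unfolding AED_def by (rule LeastI)
  then show ?thesis using aed_emb by blast
qed

lemma edg_Nil2[simp]: "edg x [] lam = lam * real (length x)"
  by (cases x) auto

lemma edg_Nil1[simp]: "edg [] y lam = lam * real (length y)"
  by (cases y) auto

lemma edg_le_len: "lam \<ge> 0 \<Longrightarrow> edg x y lam \<le> lam * real (length x) + lam * real (length y)"
  by (cases "(x, y, lam)" rule: edg.cases) auto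

lemma edg_delx: "edg (a # x) y lam \<le> edg x y lam + lam + real (length a)"
  by (cases y) (auto simp: algebra_simps)

lemma edg_dely: "edg x (b # y) lam \<le> edg x y lam + lam + real (length b)"
  by (cases x) (auto simp: algebra_simps)

lemma emb_cons_cases: "emb x (p # L) c \<Longrightarrow>
   (\<exists>a x' c'. x = a # x' \<and> emb x' L c' \<and> c = c' + ED a p) \<or> (\<exists>c'. emb x L c' \<and> c = c' + length p)"
  by (cases rule: emb.cases) auto

lemma partB: "lam \<ge> 0 \<Longrightarrow> emb x (C @ A) c1 \<Longrightarrow> emb y (C @ B) c2 \<Longrightarrow>
  edg x y lam \<le> real c1 + real c2 + lam * real (length C + length A + length B)"
proof (induction C arbitrary: x y c1 c2)
  case Nil
  have "edg x y lam \<le> lam * real (length x) + lam * real (length y)" using edg_le_len Nil by blast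
  also have "\<dots> \<le> lam * real (length A) + lam * real (length B)"
    using emb_len[OF Nil(2)] emb_len[OF Nil(3)] Nil(1)
    by (intro add_mono mult_left_mono) auto
  finally show ?case by (simp add: algebra_simps)
next
  case (Cons p C)
  have X: "(\<exists>a x' c'. x = a # x' \<and> emb x' (C @ A) c' \<and> c1 = c' + ED a p) \<or> (\<exists>c'. emb x (C @ A) c' \<and> c1 = c' + length p)"
    using emb_cons_cases[of x p "C @ A" c1] Cons.prems(2) by simp
  have Y: "(\<exists>a x' c'. y = a # x' \<and> emb x' (C @ B) c' \<and> c2 = c' + ED a p) \<or> (\<exists>c'. emb y (C @ B) c' \<and> c2 = c' + length p)"
    using emb_cons_cases[of y p "C @ B" c2] Cons.prems(3) by simp
  from X Y show ?case
  proof (elim disjE exE conjE)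
    fix a x' c1' b y' c2'
    assume h: "x = a # x'" "emb x' (C @ A) c1'" "c1 = c1' + ED a p"
       "y = b # y'" "emb y' (C @ B) c2'" "c2 = c2' + ED b p"
    have "edg x y lam \<le> edg x' y' lam + lam + real (ED a b)" using h by simp
    moreover have "ED a b \<le> ED a p + ED b p" using ED_tri[of a b p] ED_sym[of p b] by simp
    moreover note Cons.IH[OF Cons.prems(1) h(2) h(5)]
    ultimately show ?thesis using h by (simp add: algebra_simps)
  next
    fix a x' c1' c2'
    assume h: "x = a # x'" "emb x' (C @ A) c1'" "c1 = c1' + ED a p"
       "emb y (C @ B) c2'" "c2 = c2' + length p"
    have "edg x y lam \<le> edg x' y lam + lam + real (length a)" using h edg_delx by simp
    moreover have "length a \<le> ED a p + length p" using ED_ge2[of a p] by simp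
    moreover note Cons.IH[OF Cons.prems(1) h(2) h(4)]
    ultimately show ?thesis using h by (simp add: algebra_simps)
  next
    fix b y' c1' c2'
    assume h: "emb x (C @ A) c1'" "c1 = c1' + length p"
       "y = b # y'" "emb y' (C @ B) c2'" "c2 = c2' + ED b p"
    have "edg x y lam \<le> edg x y' lam + lam + real (length b)" using h edg_dely by simp
    moreover have "length b \<le> ED b p + length p" using ED_ge2[of b p] by simp
    moreover note Cons.IH[OF Cons.prems(1) h(1) h(4)]
    ultimately show ?thesis using h by (simp add: algebra_simps)
  next
    fix c1' c2'
    assume h: "emb x (C @ A) c1'" "c1 = c1' + length p"
       "emb y (C @ B) c2'" "c2 = c2' + length p"
    note Cons.IH[OF Cons.prems(1) h(1) h(3)]
    then show ?thesis using h Cons.prems(1) by (simp add: algebra_simps)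
  qed
qed


lemma rp_unique: "root_path r N par v ps \<Longrightarrow> r \<notin> N \<Longrightarrow> root_path r N par v qs \<Longrightarrow> ps = qs"
proof (induction arbitrary: qs rule: root_path.induct)
  case root
  from root(2) show ?case by (cases rule: root_path.cases) (use root(1) in simp_all)
next
  case (step v ps)
  note IH = step.IH and vN = step.hyps(1) and rN = step.prems(1)
  from step.prems(2) show ?case
  proof (cases rule: root_path.cases)
    case root then show ?thesis using vN rN by simp
  next
    case (step qs')
    have "ps = qs'" using IH[OF rN] step(3) by simp
    then show ?thesis using step(1) by simp
  qed
qed

lemma rp_subset: "root_path r N par v ps \<Longrightarrow> set ps \<subseteq> N"
  by (induction rule: root_path.induct) auto

lemma rp_prefix: "root_path r N par v ps \<Longrightarrow> ps = ps1 @ u # ps2 \<Longrightarrow> root_path r N par u (ps1 @ [u])"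
proof (induction arbitrary: ps2 rule: root_path.induct)
  case root then show ?case by simp
next
  case (step v ps)
  show ?case
  proof (cases ps2 rule: rev_cases)
    case Nil
    then have "u = v" "ps1 = ps" using step.prems by auto
    then show ?thesis using root_path.step[OF step.hyps] by simp
  next
    case (snoc ps2' z)
    then have "ps = ps1 @ u # ps2'" using step.prems by simp
    then show ?thesis using step.IH by blast
  qed
qed

lemma rp_distinct: "root_path r N par v ps \<Longrightarrow> r \<notin> N \<Longrightarrow> distinct ps"
proof (induction rule: root_path.induct)
  case root then show ?case by simp
next
  case (step v ps)
  have rN: "r \<notin> N" by fact
  have h2: "root_path r N par v (ps @ [v])" by (rule root_path.step[OF step.hyps])
  have "v \<notin> set ps"
  proof
    assume "v \<in> set ps"
    then obtain ps1 ps2 where sp: "ps = ps1 @ v # ps2" using split_list[of v ps] by blast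
    have h1: "root_path r N par v (ps1 @ [v])" by (rule rp_prefix[OF step.hyps(2) sp])
    have "ps1 @ [v] = ps @ [v]" by (rule rp_unique[OF h1 rN h2])
    then show False using sp by simp
  qed
  moreover have "distinct ps" using step.IH rN by blast
  ultimately show ?case by simp
qed

lemma common_prefix: "\<exists>C A B. P = C @ A \<and> Q = C @ B \<and> (A = [] \<or> B = [] \<or> hd A \<noteq> hd B)"
proof (induction P arbitrary: Q)
  case Nil
  show ?case by (rule exI[of _ "[]"], rule exI[of _ "[]"], rule exI[of _ Q]) simp
next
  case (Cons a P)
  note IH = Cons.IH
  show ?case
  proof (cases Q)
    case Nil then show ?thesis by (intro exI[of _ "[]"] exI[of _ "a # P"] exI[of _ "[]"]) simp
  next
    case (Cons b Q')
    show ?thesis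
    proof (cases "a = b")
      case True
      obtain C A B where h: "P = C @ A" "Q' = C @ B" "A = [] \<or> B = [] \<or> hd A \<noteq> hd B"
        using IH[of Q'] by blast
      show ?thesis using True Cons h by (intro exI[of _ "a # C"] exI[of _ A] exI[of _ B]) simp
    next
      case False then show ?thesis using Cons by (intro exI[of _ "[]"] exI[of _ "a # P"] exI[of _ Q]) simp
    qed
  qed
qed

lemma disjoint_tails:
  assumes "r \<notin> N" "root_path r N par vx (C @ A)" "root_path r N par vy (C @ B)"
    "A = [] \<or> B = [] \<or> hd A \<noteq> hd B"
  shows "set A \<inter> set B = {}"
proof (rule ccontr)
  assume "set A \<inter> set B \<noteq> {}"
  then obtain u where uA: "u \<in> set A" and uB: "u \<in> set B" by blast
  obtain A1 A2 where a: "A = A1 @ u # A2" using split_list[OF uA] by blast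
  obtain B1 B2 where b: "B = B1 @ u # B2" using split_list[OF uB] by blast
  have h1: "root_path r N par u ((C @ A1) @ [u])" using rp_prefix[OF assms(2), of "C @ A1" u A2] a by simp
  have h2: "root_path r N par u ((C @ B1) @ [u])" using rp_prefix[OF assms(3), of "C @ B1" u B2] b by simp
  have "(C @ A1) @ [u] = (C @ B1) @ [u]" by (rule rp_unique[OF h1 assms(1) h2])
  then have "A1 = B1" by simp
  then show False using assms(4) a b by (cases A1) auto
qed

lemma rp_exists: "is_rooted_tree r N par \<Longrightarrow> v \<in> insert r N \<Longrightarrow> \<exists>ps. root_path r N par v ps"
proof -
  assume T: "is_rooted_tree r N par" and v: "v \<in> insert r N"
  show ?thesis
  proof (cases "v = r")
    case True then show ?thesis using root_path.root[of r N par] by blast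
  next
    case False then have "v \<in> N" using v by simp
    then show ?thesis using T unfolding is_rooted_tree_def by blast
  qed
qed

lemma L_T_eq: "r \<notin> N \<Longrightarrow> root_path r N par v ps \<Longrightarrow> L_T r N par lab v = map lab ps"
proof -
  assume rN: "r \<notin> N" and P: "root_path r N par v ps"
  have "(THE ps. root_path r N par v ps) = ps"
    by (rule the_equality[where P="\<lambda>ps. root_path r N par v ps", OF P]) (rule rp_unique[OF _ rN P])
  then show ?thesis unfolding L_T_def by simp
qed


theorem lemma10:
  fixes x y :: "('a::finite) list list"
    and lam :: real
    and r :: 'v and N :: "'v set" and par :: "'v \<Rightarrow> 'v" and lab :: "'v \<Rightarrow> 'a list"
    and vx vy :: 'v
  assumes "lam \<ge> 0"
    and "valid_summary_tree r N par lab vx vy x y"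
  shows "EDG x y lam \<le> error_T lam r N par lab vx vy x y"
proof -
  have T: "is_rooted_tree r N par" and vx: "vx \<in> insert r N" and vy: "vy \<in> insert r N"
    and lx: "length x \<le> length (L_T r N par lab vx)" and ly: "length y \<le> length (L_T r N par lab vy)"
    using assms(2) unfolding valid_summary_tree_def by auto
  have rN: "r \<notin> N" and fin: "finite N" using T unfolding is_rooted_tree_def by auto
  obtain P where P: "root_path r N par vx P" using rp_exists[OF T vx] by blast
  obtain Q where Q: "root_path r N par vy Q" using rp_exists[OF T vy] by blast
  obtain C A B where CAB: "P = C @ A" "Q = C @ B" "A = [] \<or> B = [] \<or> hd A \<noteq> hd B"
    using common_prefix by blast
  have LX: "L_T r N par lab vx = map lab C @ map lab A" using L_T_eq[OF rN P] CAB by simp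
  have LY: "L_T r N par lab vy = map lab C @ map lab B" using L_T_eq[OF rN Q] CAB by simp
  have dP: "distinct (C @ A)" using rp_distinct[OF P rN] CAB by simp
  have dQ: "distinct (C @ B)" using rp_distinct[OF Q rN] CAB by simp
  have disj: "set A \<inter> set B = {}" using disjoint_tails[OF rN _ _ CAB(3)] P Q CAB(1,2) by simp
  have d: "distinct (C @ A @ B)" using dP dQ disj by auto
  have sub: "set (C @ A @ B) \<subseteq> N" using rp_subset[OF P] rp_subset[OF Q] CAB by auto
  have card: "length C + length A + length B \<le> card N"
    using card_mono[OF fin sub] distinct_card[OF d] by simp
  obtain c1 where c1: "c1 \<le> AED x (L_T r N par lab vx)" "emb x (map lab C @ map lab A) c1"
    using AED_emb[OF lx] LX by auto
  obtain c2 where c2: "c2 \<le> AED y (L_T r N par lab vy)" "emb y (map lab C @ map lab B) c2"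
    using AED_emb[OF ly] LY by auto
  have "EDG x y lam \<le> real c1 + real c2 + lam * real (length C + length A + length B)"
    unfolding EDG_def using partB[OF assms(1) c1(2) c2(2)] by simp
  also have "\<dots> \<le> real (AED x (L_T r N par lab vx)) + real (AED y (L_T r N par lab vy)) + lam * real (card N)"
    using c1(1) c2(1) card assms(1) by (intro add_mono mult_left_mono) auto
  finally show ?thesis unfolding error_T_def .
qed

end
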